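(* If a tiling $T$ contains a triple $ijk$ (with $i<j<k$), then $T$ contains a dense triple $(\ell-1)\,\ell\,(\ell+1)$ for some $\ell$ with $i<\ell<k$.
   Context: Fix an integer $n\ge 3$ and write $[n]=\{1,\dots,n\}$. Let $\Lambda$ be the set of 3-element subsets of $[n]$; a triple $\{i,j,k\}$ with $i<j<k$ is written $ijk$. For a 4-element subset $F=\{i<j<k<l\}$ of $[n]$, the stick of $F$ is the sequence $(ijk,\ ijl,\ ikl,\ jkl)$. A tiling (the inversion set of a rhombus tiling of the zonogon $Z(n;2)$) is a subset $T\subseteq\Lambda$ such that for every 4-element $F\subseteq[n]$, $T\cap\mathrm{stick}(F)$ is an initial segment or a final segment of the stick (empty set and whole stick allowed). *)

theory Defs
  imports Main
begin

definition Lambda :: "nat \<Rightarrow> nat set set" where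
  "Lambda n = {S. S \<subseteq> {1..n} \<and> card S = 3}"

definition stick :: "nat \<Rightarrow> nat \<Rightarrow> nat \<Rightarrow> nat \<Rightarrow> nat set list" where
  "stick i j k l = [{i,j,k}, {i,j,l}, {i,k,l}, {j,k,l}]"

definition segment_cond :: "nat set set \<Rightarrow> nat set list \<Rightarrow> bool" where
  "segment_cond T s \<longleftrightarrow>
     (\<exists>m \<le> length s. T \<inter> set s = set (take m s) \<or> T \<inter> set s = set (drop m s))"

definition tiling :: "nat \<Rightarrow> nat set set \<Rightarrow> bool" where
  "tiling n T \<longleftrightarrow> T \<subseteq> Lambda n \<and>
     (\<forall>i j k l. 1 \<le> i \<and> i < j \<and> j < k \<and> k < l \<and> l \<le> n \<longrightarrow>
        segment_cond T (stick i j k l))"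

end

theory Submission
  imports Defs
begin

lemma seg_aux:
  assumes "segment_cond T [A,B,C,D]" "distinct [A,B,C,D]" "B \<in> T \<or> C \<in> T"
  shows "A \<in> T \<or> D \<in> T"
proof -
  obtain m where m0: "m \<le> length [A,B,C,D]" and h: "T \<inter> set [A,B,C,D] = set (take m [A,B,C,D]) \<or>
     T \<inter> set [A,B,C,D] = set (drop m [A,B,C,D])"
    using assms(1) unfolding segment_cond_def by blast
  have m: "m \<le> 4" using m0 by simp
  have AT: "A \<in> T \<longleftrightarrow> A \<in> T \<inter> set [A,B,C,D]" and DT: "D \<in> T \<longleftrightarrow> D \<in> T \<inter> set [A,B,C,D]"
   and BT: "B \<in> T \<longleftrightarrow> B \<in> T \<inter> set [A,B,C,D]" and CT: "C \<in> T \<longleftrightarrow> C \<in> T \<inter> set [A,B,C,D]" by auto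
  have "m = 0 \<or> m = 1 \<or> m = 2 \<or> m = 3 \<or> m = 4" using m by auto
  then show ?thesis using h assms(2,3) unfolding AT DT BT CT
    by (elim disjE) (simp_all only: take.simps drop.simps numeral_eq_Suc pred_numeral_simps take_Suc_Cons drop_Suc_Cons; simp)+
qed

lemma main:
  assumes "tiling n T"
  shows "\<And>i j k. k - i = d \<Longrightarrow> i < j \<Longrightarrow> j < k \<Longrightarrow> {i, j, k} \<in> T \<Longrightarrow>
     \<exists>l. i < l \<and> l < k \<and> {l - 1, l, l + 1} \<in> T"
proof (induction d rule: less_induct)
  case (less d i j k)
  have sub: "{i,j,k} \<subseteq> {1..n}" using less.prems(4) assms unfolding tiling_def Lambda_def by auto
  hence b: "1 \<le> i" "k \<le> n" by auto
  have st: "\<And>a b c e. 1 \<le> a \<Longrightarrow> a < b \<Longrightarrow> b < c \<Longrightarrow> c < e \<Longrightarrow> e \<le> n \<Longrightarrow>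
      segment_cond T [{a,b,c},{a,b,e},{a,c,e},{b,c,e}]"
    using assms unfolding tiling_def stick_def by blast
  show ?case
  proof (cases "k = i + 2")
    case True
    then have "j = i + 1" using less.prems by auto
    then have "{j-1,j,j+1} = {i,j,k}" using True by auto
    then show ?thesis using less.prems True \<open>j = i + 1\<close> by (intro exI[of _ j]) auto
  next
    case False
    show ?thesis
    proof (cases "j - i \<ge> 2")
      case True
      define m where "m = i + 1"
      have m: "i < m" "m < j" using True m_def by auto
      have "segment_cond T [{i,m,j},{i,m,k},{i,j,k},{m,j,k}]"
        using st[of i m j k] m less.prems b by auto
      moreover have "distinct [{i,m,j},{i,m,k},{i,j,k},{m,j,k}]"
        using m less.prems by (auto simp: insert_eq_iff doubleton_eq_iff)
      ultimately have "{i,m,j} \<in> T \<or> {m,j,k} \<in> T" using seg_aux less.prems(4) by blast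
      then show ?thesis
      proof
        assume tr: "{i,m,j} \<in> T"
        have "j - i < d" using less.prems m by simp
        from less.IH[OF this refl m(1) m(2) tr] obtain l where "i < l" "l < j" "{l - 1, l, l + 1} \<in> T" by blast
        then show ?thesis using less.prems m by (intro exI[of _ l]) auto
      next
        assume tr: "{m,j,k} \<in> T"
        have "k - m < d" using less.prems m by simp
        from less.IH[OF this refl m(2) less.prems(3) tr] obtain l where "m < l" "l < k" "{l - 1, l, l + 1} \<in> T" by blast
        then show ?thesis using less.prems m by (intro exI[of _ l]) auto
      qed
    next
      case False
      hence "k - j \<ge> 2" using \<open>k \<noteq> i + 2\<close> less.prems by auto
      define m where "m = j + 1"
      have m: "j < m" "m < k" using \<open>k - j \<ge> 2\<close> m_def by auto
      have "segment_cond T [{i,j,m},{i,j,k},{i,m,k},{j,m,k}]"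
        using st[of i j m k] m less.prems b by auto
      moreover have "distinct [{i,j,m},{i,j,k},{i,m,k},{j,m,k}]"
        using m less.prems by (auto simp: insert_eq_iff doubleton_eq_iff)
      ultimately have "{i,j,m} \<in> T \<or> {j,m,k} \<in> T" using seg_aux less.prems(4) by blast
      then show ?thesis
      proof
        assume tr: "{i,j,m} \<in> T"
        have "m - i < d" using less.prems m by simp
        from less.IH[OF this refl less.prems(2) m(1) tr] obtain l where "i < l" "l < m" "{l - 1, l, l + 1} \<in> T" by blast
        then show ?thesis using less.prems m by (intro exI[of _ l]) auto
      next
        assume tr: "{j,m,k} \<in> T"
        have "k - j < d" using less.prems m by simp
        from less.IH[OF this refl m(1) m(2) tr] obtain l where "j < l" "l < k" "{l - 1, l, l + 1} \<in> T" by blast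
        then show ?thesis using less.prems m by (intro exI[of _ l]) auto
      qed
    qed
  qed
qed

theorem lemma4:
  fixes n i j k :: nat and T :: "nat set set"
  assumes "n \<ge> 3"
    and "tiling n T"
    and "i < j" and "j < k"
    and "{i, j, k} \<in> T"
  shows "\<exists>l. i < l \<and> l < k \<and> {l - 1, l, l + 1} \<in> T"
  using main[OF assms(2) refl assms(3,4,5)] .

end
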